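(* Let $b\in\mathbb{K}_{d,1}$ and $b_n=\varphi_n*b$ as below. Then $H^\gamma_{b-b_n}(t,x)$ converges to $0$ uniformly on compact subsets of $(0,\infty)\times\mathbb{R}^d$ as $n\to\infty$.
   Context: Standing assumption: $d\ge2$, $\alpha\in(0,2)$; $b:\mathbb{R}^d\to\mathbb{R}^d$ with $\sup_x\int_{|x-y|<r}|b(y)||x-y|^{1-d}dy\to0$ as $r\downarrow0$ (Kato class $\mathbb{K}_{d,1}$). Let $\varphi\ge0$ be in $C_c^\infty(\mathbb{R}^d)$ with support in $B(0,1)$ and $\int\varphi=1$; $\varphi_n(x)=n^d\varphi(nx)$ and $b_n(x)=\int\varphi_n(x-y)b(y)dy$. Let $\gamma=(1+\alpha\wedge1)/2$, $H^\beta(r,x)=\frac{1}{|x|^{d-1}}\wedge\frac{r^\beta}{|x|^{d-1+2\beta}}$ and $H^\beta_f(r,x)=\int_{\mathbb{R}^d}|f(y)|H^\beta(r,x-y)dy$. *)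

theory Defs
  imports "HOL-Analysis.Analysis"
begin

coinductive smooth_fun :: "('a::euclidean_space \<Rightarrow> real) \<Rightarrow> bool" where
  "(\<forall>x. f differentiable (at x)) \<Longrightarrow>
   (\<forall>i\<in>Basis. smooth_fun (\<lambda>x. frechet_derivative f (at x) i)) \<Longrightarrow> smooth_fun f"

definition kato_d1 :: "('a::euclidean_space \<Rightarrow> 'a) \<Rightarrow> bool" where
  "kato_d1 b \<longleftrightarrow> b \<in> borel_measurable lborel \<and>
     ((\<lambda>r. SUP x. (\<integral>\<^sup>+ y. ennreal (norm (b y) * dist x y powr (1 - real DIM('a)))
                       * indicator (ball x r) y \<partial>lborel)) \<longlongrightarrow> 0) (at_right 0)"

definition moll :: "('a::euclidean_space \<Rightarrow> real) \<Rightarrow> nat \<Rightarrow> 'a \<Rightarrow> real" where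
  "moll \<phi> n x = real n ^ DIM('a) * \<phi> (real n *\<^sub>R x)"

definition mollify :: "('a::euclidean_space \<Rightarrow> real) \<Rightarrow> nat \<Rightarrow> ('a \<Rightarrow> 'a) \<Rightarrow> 'a \<Rightarrow> 'a" where
  "mollify \<phi> n b x = (\<integral> y. moll \<phi> n (x - y) *\<^sub>R b y \<partial>lborel)"

definition Hker :: "real \<Rightarrow> real \<Rightarrow> 'a::euclidean_space \<Rightarrow> real" where
  "Hker \<beta> r x = min (norm x powr (1 - real DIM('a)))
                     (r powr \<beta> / norm x powr (real DIM('a) - 1 + 2 * \<beta>))"

definition Hf :: "('a::euclidean_space \<Rightarrow> 'a) \<Rightarrow> real \<Rightarrow> real \<Rightarrow> 'a \<Rightarrow> ennreal" where
  "Hf f \<beta> r x = (\<integral>\<^sup>+ y. ennreal (norm (f y) * Hker \<beta> r (x - y)) \<partial>lborel)"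

end

theory Submission
  imports Defs
begin


lemma smooth_cont: "smooth_fun f \<Longrightarrow> continuous_on UNIV f"
  by (erule smooth_fun.cases) (auto intro!: continuous_at_imp_continuous_on differentiable_imp_continuous_within)

lemma lborel_reflect: "distr lborel borel (\<lambda>v. y - v) = (lborel :: 'a::euclidean_space measure)"
proof -
  have "lborel = density (distr lborel borel (\<lambda>x. y + (-1::real) *\<^sub>R x)) (\<lambda>_. \<bar>-1::real\<bar>^DIM('a))"
    by (rule lborel_affine) simp
  then show ?thesis by (simp add: density_1)
qed

lemma lborel_shift: "distr lborel borel (\<lambda>v. v + y) = (lborel :: 'a::euclidean_space measure)"
proof -
  have "(\<lambda>v. v + y) = (+) y" by (auto simp: add.commute)
  then show ?thesis using lborel_distr_plus[of y] by simp
qed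

lemma nn_integral_reflect:
  fixes f :: "'a::euclidean_space \<Rightarrow> ennreal"
  assumes [measurable]: "f \<in> borel_measurable borel"
  shows "(\<integral>\<^sup>+ w. f w \<partial>lborel) = (\<integral>\<^sup>+ v. f (y - v) \<partial>lborel)"
proof -
  have "(\<integral>\<^sup>+ w. f w \<partial>lborel) = (\<integral>\<^sup>+ w. f w \<partial>distr lborel borel (\<lambda>v. y - v))"
    by (simp add: lborel_reflect)
  also have "\<dots> = (\<integral>\<^sup>+ v. f (y - v) \<partial>lborel)"
    by (subst nn_integral_distr) auto
  finally show ?thesis .
qed

lemma nn_integral_shift:
  fixes f :: "'a::euclidean_space \<Rightarrow> ennreal"
  assumes [measurable]: "f \<in> borel_measurable borel"
  shows "(\<integral>\<^sup>+ w. f w \<partial>lborel) = (\<integral>\<^sup>+ v. f (v + y) \<partial>lborel)"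
proof -
  have "(\<integral>\<^sup>+ w. f w \<partial>lborel) = (\<integral>\<^sup>+ w. f w \<partial>distr lborel borel (\<lambda>v. v + y))"
    by (simp add: lborel_shift)
  also have "\<dots> = (\<integral>\<^sup>+ v. f (v + y) \<partial>lborel)"
    by (subst nn_integral_distr) auto
  finally show ?thesis .
qed

lemma integral_reflect:
  fixes f :: "'a::euclidean_space \<Rightarrow> 'b::{banach, second_countable_topology}"
  assumes [measurable]: "f \<in> borel_measurable borel"
  shows "(\<integral> w. f w \<partial>lborel) = (\<integral> v. f (y - v) \<partial>lborel)"
proof -
  have "(\<integral> w. f w \<partial>lborel) = (\<integral> w. f w \<partial>distr lborel borel (\<lambda>v. y - v))"
    by (simp add: lborel_reflect)
  also have "\<dots> = (\<integral> v. f (y - v) \<partial>lborel)"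
    by (subst integral_distr) auto
  finally show ?thesis .
qed


lemma conv_bound:
  fixes g N k :: "'a::euclidean_space \<Rightarrow> ennreal"
  assumes [measurable]: "g \<in> borel_measurable borel" "N \<in> borel_measurable borel" "k \<in> borel_measurable borel"
    and S: "\<And>x'. (\<integral>\<^sup>+ y. N y * k (x' - y) \<partial>lborel) \<le> S"
  shows "(\<integral>\<^sup>+ y. (\<integral>\<^sup>+ v. g v * N (y - v) \<partial>lborel) * k (x - y) \<partial>lborel) \<le> (\<integral>\<^sup>+ v. g v \<partial>lborel) * S"
proof -
  have "(\<integral>\<^sup>+ y. (\<integral>\<^sup>+ v. g v * N (y - v) \<partial>lborel) * k (x - y) \<partial>lborel)
      = (\<integral>\<^sup>+ y. (\<integral>\<^sup>+ v. g v * N (y - v) * k (x - y) \<partial>lborel) \<partial>lborel)"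
    by (subst nn_integral_multc[symmetric]) auto
  also have "\<dots> = (\<integral>\<^sup>+ v. (\<integral>\<^sup>+ y. g v * N (y - v) * k (x - y) \<partial>lborel) \<partial>lborel)"
    by (rule lborel_pair.Fubini') measurable
  also have "\<dots> = (\<integral>\<^sup>+ v. g v * (\<integral>\<^sup>+ y. N (y - v) * k (x - y) \<partial>lborel) \<partial>lborel)"
    by (subst nn_integral_cmult[symmetric]) (auto simp: mult.assoc)
  also have "\<dots> \<le> (\<integral>\<^sup>+ v. g v * S \<partial>lborel)"
  proof (intro nn_integral_mono mult_left_mono)
    fix v
    have "(\<integral>\<^sup>+ y. N (y - v) * k (x - y) \<partial>lborel) = (\<integral>\<^sup>+ u. N (u + v - v) * k (x - (u + v)) \<partial>lborel)"
      by (rule nn_integral_shift) measurable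
    also have "\<dots> = (\<integral>\<^sup>+ u. N u * k ((x - v) - u) \<partial>lborel)"
      by (simp add: algebra_simps)
    also have "\<dots> \<le> S" by (rule S)
    finally show "(\<integral>\<^sup>+ y. N (y - v) * k (x - y) \<partial>lborel) \<le> S" .
  qed simp
  also have "\<dots> = (\<integral>\<^sup>+ v. g v \<partial>lborel) * S"
    by (rule nn_integral_multc) simp
  finally show ?thesis .
qed

lemma conv_bound2:
  fixes g N k :: "'a::euclidean_space \<Rightarrow> ennreal"
  assumes [measurable]: "g \<in> borel_measurable borel" "N \<in> borel_measurable borel" "k \<in> borel_measurable borel"
    and S: "\<And>x'. (\<integral>\<^sup>+ y. N y * k (x' - y) \<partial>lborel) \<le> S"
  shows "(\<integral>\<^sup>+ y. N y * (\<integral>\<^sup>+ v. g v * k (x - y - v) \<partial>lborel) \<partial>lborel) \<le> (\<integral>\<^sup>+ v. g v \<partial>lborel) * S"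
proof -
  have "(\<integral>\<^sup>+ y. N y * (\<integral>\<^sup>+ v. g v * k (x - y - v) \<partial>lborel) \<partial>lborel)
      = (\<integral>\<^sup>+ y. (\<integral>\<^sup>+ v. g v * (N y * k ((x - v) - y)) \<partial>lborel) \<partial>lborel)"
    by (subst nn_integral_cmult[symmetric]) (auto simp: algebra_simps)
  also have "\<dots> = (\<integral>\<^sup>+ v. (\<integral>\<^sup>+ y. g v * (N y * k ((x - v) - y)) \<partial>lborel) \<partial>lborel)"
    by (rule lborel_pair.Fubini') measurable
  also have "\<dots> = (\<integral>\<^sup>+ v. g v * (\<integral>\<^sup>+ y. N y * k ((x - v) - y) \<partial>lborel) \<partial>lborel)"
    by (subst nn_integral_cmult[symmetric]) auto
  also have "\<dots> \<le> (\<integral>\<^sup>+ v. g v * S \<partial>lborel)"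
    by (intro nn_integral_mono mult_left_mono S) simp
  also have "\<dots> = (\<integral>\<^sup>+ v. g v \<partial>lborel) * S"
    by (rule nn_integral_multc) simp
  finally show ?thesis .
qed


locale setting =
  fixes b :: "'a::euclidean_space \<Rightarrow> 'a" and \<phi> :: "'a \<Rightarrow> real"
  assumes dim: "DIM('a) \<ge> 2" and kato: "kato_d1 b"
    and phi_cont: "continuous_on UNIV \<phi>" and phi_nn: "\<And>x. \<phi> x \<ge> 0"
    and phi_supp: "\<And>x. 1 \<le> norm x \<Longrightarrow> \<phi> x = 0"
    and phi_int: "integral\<^sup>L lborel \<phi> = 1"
begin

lemma b_meas[measurable]: "b \<in> borel_measurable borel"
  using kato unfolding kato_d1_def by (simp add: measurable_lborel1 measurable_lborel2)

lemma phi_meas[measurable]: "\<phi> \<in> borel_measurable borel"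
  by (rule borel_measurable_continuous_onI[OF phi_cont])

lemma moll_meas[measurable]: "moll \<phi> n \<in> borel_measurable borel"
  unfolding moll_def by measurable

lemma phi_bounded: obtains C where "C > 0" "\<And>x. \<phi> x \<le> C"
proof -
  have "compact (\<phi> ` cball 0 1)"
    by (rule compact_continuous_image) (auto intro: continuous_on_subset[OF phi_cont])
  then obtain C where C: "C > 0" "\<And>y. y \<in> \<phi> ` cball 0 1 \<Longrightarrow> norm y \<le> C"
    by (meson bounded_pos compact_imp_bounded)
  have "\<phi> x \<le> C" for x
  proof (cases "norm x \<le> 1")
    case True then show ?thesis using C(2)[of "\<phi> x"] by auto
  next
    case False then show ?thesis using phi_supp[of x] C by auto
  qed
  with C show ?thesis using that by blast
qed

lemma phi_integrable: "integrable lborel \<phi>"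
  using phi_int not_integrable_integral_eq by fastforce

lemma nn_phi: "(\<integral>\<^sup>+ x. ennreal (\<phi> x) \<partial>lborel) = 1"
  using nn_integral_eq_integral[OF phi_integrable] phi_nn phi_int by simp

lemma moll_nn: "moll \<phi> n v \<ge> 0"
  unfolding moll_def using phi_nn by simp

lemma moll_zero: assumes "n \<ge> 1" "1 / real n \<le> norm v" shows "moll \<phi> n v = 0"
proof -
  have "1 \<le> norm (real n *\<^sub>R v)" using assms by (auto simp: field_simps)
  then show ?thesis unfolding moll_def using phi_supp by simp
qed

lemma nn_moll: assumes "n \<ge> 1" shows "(\<integral>\<^sup>+ v. ennreal (moll \<phi> n v) \<partial>lborel) = 1"
proof -
  have "(\<integral>\<^sup>+ x. ennreal (\<phi> x) \<partial>lborel) = (\<integral>\<^sup>+ x. ennreal (moll \<phi> n x) \<partial>lborel)"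
    apply (subst lborel_affine[of "real n" 0])
    using assms apply simp
    apply (simp add: nn_integral_density nn_integral_distr moll_def ennreal_mult' phi_nn)
    done
  then show ?thesis using nn_phi by simp
qed

lemma moll_integrable: assumes "n \<ge> 1" shows "integrable lborel (moll \<phi> n)"
  by (rule integrableI_nn_integral_finite[where x=1]) (use nn_moll[OF assms] moll_nn in auto)

lemma int_moll: assumes "n \<ge> 1" shows "integral\<^sup>L lborel (moll \<phi> n) = 1"
  using nn_integral_eq_integral[OF moll_integrable[OF assms]] nn_moll[OF assms] moll_nn by simp

end


context setting begin


lemma balls_meas[measurable]: "ball c r \<in> sets borel" "cball c r \<in> sets borel"
  "ball c r \<in> sets lborel" "cball c r \<in> sets lborel"
  by auto

definition Kf :: "real \<Rightarrow> ennreal" where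
  "Kf r = (SUP x. (\<integral>\<^sup>+ y. ennreal (norm (b y) * dist x y powr (1 - real DIM('a))) * indicator (ball x r) y \<partial>lborel))"

lemma Kf_tendsto: "(Kf \<longlongrightarrow> 0) (at_right 0)"
  using kato unfolding kato_d1_def Kf_def[abs_def] by simp

lemma Kf_small: assumes "0 < e" obtains r where "0 < r" "r \<le> 1" "Kf r < e"
proof -
  have "eventually (\<lambda>r. Kf r < e) (at_right 0)"
    using order_tendstoD(2)[OF Kf_tendsto] assms by simp
  then obtain c where c: "c > 0" "\<And>y. y > 0 \<Longrightarrow> y < c \<Longrightarrow> Kf y < e"
    unfolding eventually_at_right_field by auto
  show ?thesis using c(2)[of "min (c/2) 1"] c(1) by (intro that[of "min (c/2) 1"]) auto
qed

definition knear :: "real \<Rightarrow> 'a \<Rightarrow> ennreal" where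
  "knear r z = ennreal (norm z powr (1 - real DIM('a))) * indicator (ball 0 r) z"

lemma knear_meas[measurable]: "knear r \<in> borel_measurable borel"
  unfolding knear_def by measurable

lemma knear_le: "(\<integral>\<^sup>+ y. ennreal (norm (b y)) * knear r (x - y) \<partial>lborel) \<le> Kf r"
proof -
  have "(\<integral>\<^sup>+ y. ennreal (norm (b y)) * knear r (x - y) \<partial>lborel)
      = (\<integral>\<^sup>+ y. ennreal (norm (b y) * dist x y powr (1 - real DIM('a))) * indicator (ball x r) y \<partial>lborel)"
    by (intro nn_integral_cong) (auto simp: knear_def ennreal_mult dist_norm indicator_def norm_minus_commute)
  also have "\<dots> \<le> Kf r" unfolding Kf_def by (rule SUP_upper) simp
  finally show ?thesis .
qed

lemma local_bound_punct:
  assumes r: "0 < r" "Kf r \<le> 1"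
  shows "(\<integral>\<^sup>+ y. ennreal (norm (b y)) * indicator (ball 0 r - {0}) (x - y) \<partial>lborel) \<le> ennreal (r powr (real DIM('a) - 1))"
proof -
  have "(\<integral>\<^sup>+ y. ennreal (norm (b y)) * indicator (ball 0 r - {0}) (x - y) \<partial>lborel)
      \<le> (\<integral>\<^sup>+ y. ennreal (r powr (real DIM('a) - 1)) * (ennreal (norm (b y)) * knear r (x - y)) \<partial>lborel)"
  proof (intro nn_integral_mono)
    fix y
    show "ennreal (norm (b y)) * indicator (ball 0 r - {0}) (x - y)
          \<le> ennreal (r powr (real DIM('a) - 1)) * (ennreal (norm (b y)) * knear r (x - y))"
    proof (cases "x - y \<in> ball 0 r - {0}")
      case True
      then have n: "0 < norm (x - y)" "norm (x - y) < r" by auto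
      have A: "norm (x - y) powr (real DIM('a) - 1) \<le> r powr (real DIM('a) - 1)"
        using n dim by (intro powr_mono2) auto
      have B: "norm (x - y) powr (1 - real DIM('a)) = inverse (norm (x - y) powr (real DIM('a) - 1))"
        using n by (simp add: powr_minus[symmetric])
      have "1 \<le> r powr (real DIM('a) - 1) * norm (x - y) powr (1 - real DIM('a))"
      proof -
        have pos: "0 < norm (x - y) powr (real DIM('a) - 1)" using n by simp
        have "1 \<le> r powr (real DIM('a) - 1) / norm (x - y) powr (real DIM('a) - 1)"
          using A pos by (simp add: le_divide_eq_1_pos)
        then show ?thesis using B by (simp add: divide_inverse)
      qed
      then have "ennreal (norm (b y)) \<le> ennreal (r powr (real DIM('a) - 1)) * (ennreal (norm (b y)) * ennreal (norm (x - y) powr (1 - real DIM('a))))"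
      proof -
        assume h: "1 \<le> r powr (real DIM('a) - 1) * norm (x - y) powr (1 - real DIM('a))"
        have "norm (b y) * 1 \<le> norm (b y) * (r powr (real DIM('a) - 1) * norm (x - y) powr (1 - real DIM('a)))"
          by (rule mult_left_mono[OF h]) simp
        then show ?thesis
          by (simp add: ennreal_mult[symmetric] ennreal_leI mult.left_commute del: ennreal_mult ennreal_mult')
      qed
      then show ?thesis using True by (simp add: knear_def)
    qed (simp)
  qed
  also have "\<dots> = ennreal (r powr (real DIM('a) - 1)) * (\<integral>\<^sup>+ y. ennreal (norm (b y)) * knear r (x - y) \<partial>lborel)"
    by (rule nn_integral_cmult) measurable
  also have "\<dots> \<le> ennreal (r powr (real DIM('a) - 1)) * 1"
    by (intro mult_left_mono order.trans[OF knear_le r(2)]) auto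
  finally show ?thesis by simp
qed

lemma local_bound:
  assumes r: "0 < r" "Kf r \<le> 1"
  shows "(\<integral>\<^sup>+ y. ennreal (norm (b y)) * indicator (ball x r) y \<partial>lborel) \<le> ennreal (r powr (real DIM('a) - 1))"
proof -
  have "(\<integral>\<^sup>+ y. ennreal (norm (b y)) * indicator (ball x r) y \<partial>lborel)
     = (\<integral>\<^sup>+ y. ennreal (norm (b y)) * indicator (ball 0 r - {0}) (x - y) \<partial>lborel)"
    using AE_lborel_singleton[of x]
    by (intro nn_integral_cong_AE) (auto elim!: eventually_mono simp: indicator_def dist_norm norm_minus_commute)
  with local_bound_punct[OF r, of x] show ?thesis by simp
qed

lemma local_int_cball: "(\<integral>\<^sup>+ y. ennreal (norm (b y)) * indicator (cball c \<rho>) y \<partial>lborel) < \<infinity>"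
proof -
  obtain r where r: "0 < r" "r \<le> 1" "Kf r < 1" using Kf_small[of 1] by auto
  have "compact (cball c \<rho>)" by simp
  then obtain C where C: "finite C" "cball c \<rho> \<subseteq> (\<Union>z\<in>C. ball z r)"
    by (rule compactE_image[where C="cball c \<rho>" and f="\<lambda>z. ball z r"]) (use r in auto)
  have "(\<integral>\<^sup>+ y. ennreal (norm (b y)) * indicator (cball c \<rho>) y \<partial>lborel)
     \<le> (\<integral>\<^sup>+ y. (\<Sum>z\<in>C. ennreal (norm (b y)) * indicator (ball z r) y) \<partial>lborel)"
  proof (intro nn_integral_mono)
    fix y show "ennreal (norm (b y)) * indicator (cball c \<rho>) y \<le> (\<Sum>z\<in>C. ennreal (norm (b y)) * indicator (ball z r) y)"
    proof (cases "y \<in> cball c \<rho>")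
      case True
      then obtain z where z: "z \<in> C" "y \<in> ball z r" using C by auto
      have "ennreal (norm (b y)) * indicator (ball z r) y \<le> (\<Sum>z\<in>C. ennreal (norm (b y)) * indicator (ball z r) y)"
        by (rule member_le_sum) (use z C in auto)
      then show ?thesis using True z by simp
    qed simp
  qed
  also have "\<dots> = (\<Sum>z\<in>C. \<integral>\<^sup>+ y. ennreal (norm (b y)) * indicator (ball z r) y \<partial>lborel)"
    by (rule nn_integral_sum) measurable
  also have "\<dots> \<le> (\<Sum>z\<in>C. ennreal (r powr (real DIM('a) - 1)))"
    by (intro sum_mono local_bound) (use r in auto)
  also have "\<dots> < \<infinity>" by (simp add: ennreal_mult_less_top of_nat_less_top)
  finally show ?thesis .
qed

end


context setting begin

definition Mo :: "nat \<Rightarrow> 'a \<Rightarrow> ennreal" where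
  "Mo n y = (\<integral>\<^sup>+ v. ennreal (moll \<phi> n v) * ennreal (norm (b (y - v))) \<partial>lborel)"

lemma Mo_meas[measurable]: "Mo n \<in> borel_measurable borel"
  unfolding Mo_def[abs_def]
  by (rule lborel.borel_measurable_nn_integral[where N=lborel, simplified]) measurable

lemma P1: "ennreal (norm (mollify \<phi> n b y)) \<le> Mo n y"
proof (cases "integrable lborel (\<lambda>w. moll \<phi> n (y - w) *\<^sub>R b w)")
  case True
  have "ennreal (norm (mollify \<phi> n b y)) \<le> (\<integral>\<^sup>+ w. ennreal (norm (moll \<phi> n (y - w) *\<^sub>R b w)) \<partial>lborel)"
    unfolding mollify_def by (rule integral_norm_bound_ennreal[OF True])
  also have "\<dots> = (\<integral>\<^sup>+ v. ennreal (norm (moll \<phi> n (y - (y - v)) *\<^sub>R b (y - v))) \<partial>lborel)"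
    by (rule nn_integral_reflect) measurable
  also have "\<dots> = Mo n y"
    unfolding Mo_def using moll_nn by (intro nn_integral_cong) (simp add: ennreal_mult)
  finally show ?thesis .
next
  case False
  then show ?thesis by (simp add: mollify_def not_integrable_integral_eq)
qed

lemma integrable_moll_shift:
  assumes n: "n \<ge> 1"
  shows "integrable lborel (\<lambda>v. moll \<phi> n v *\<^sub>R b (y - v))"
proof (rule integrableI_bounded)
  show "(\<lambda>v. moll \<phi> n v *\<^sub>R b (y - v)) \<in> borel_measurable lborel" by measurable
  obtain C where C: "C > 0" "\<And>x. \<phi> x \<le> C" using phi_bounded by blast
  have "(\<integral>\<^sup>+ v. ennreal (norm (moll \<phi> n v *\<^sub>R b (y - v))) \<partial>lborel)
     \<le> (\<integral>\<^sup>+ v. ennreal (real n ^ DIM('a) * C) * (ennreal (norm (b (y - v))) * indicator (ball 0 1) v) \<partial>lborel)"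
  proof (intro nn_integral_mono)
    fix v
    show "ennreal (norm (moll \<phi> n v *\<^sub>R b (y - v))) \<le> ennreal (real n ^ DIM('a) * C) * (ennreal (norm (b (y - v))) * indicator (ball 0 1) v)"
    proof (cases "v \<in> ball 0 1")
      case True
      have "moll \<phi> n v \<le> real n ^ DIM('a) * C"
        unfolding moll_def using C by (intro mult_left_mono) auto
      then have "norm (moll \<phi> n v *\<^sub>R b (y - v)) \<le> real n ^ DIM('a) * C * norm (b (y - v))"
        using moll_nn[of n v] by (simp add: mult_right_mono)
      then show ?thesis using True C by (simp add: ennreal_mult[symmetric] ennreal_leI del: ennreal_mult ennreal_mult')
    next
      case False
      then have "1 \<le> norm v" by simp
      moreover have "1 \<le> real n" using n by simp
      ultimately have "1 * 1 \<le> real n * norm v" by (intro mult_mono) auto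
      then have "1 / real n \<le> norm v" using n by (simp add: field_simps)
      then show ?thesis using moll_zero[OF n] by simp
    qed
  qed
  also have "\<dots> = ennreal (real n ^ DIM('a) * C) * (\<integral>\<^sup>+ v. ennreal (norm (b (y - v))) * indicator (ball 0 1) v \<partial>lborel)"
    by (rule nn_integral_cmult) measurable
  also have "(\<integral>\<^sup>+ v. ennreal (norm (b (y - v))) * indicator (ball 0 1) v \<partial>lborel)
       = (\<integral>\<^sup>+ w. ennreal (norm (b (y - (y - w)))) * indicator (ball 0 1) (y - w) \<partial>lborel)"
    by (rule nn_integral_reflect) measurable
  also have "\<dots> \<le> (\<integral>\<^sup>+ w. ennreal (norm (b w)) * indicator (cball y 1) w \<partial>lborel)"
    by (intro nn_integral_mono) (auto simp: indicator_def dist_norm norm_minus_commute)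
  finally show "(\<integral>\<^sup>+ v. ennreal (norm (moll \<phi> n v *\<^sub>R b (y - v))) \<partial>lborel) < \<infinity>"
    using local_int_cball[of y 1]
    by (simp add: ennreal_mult_less_top order.strict_trans1 top.not_eq_extremum)
      (smt (verit, best) ennreal_less_top ennreal_mult_less_top mult_left_mono order.strict_trans1 zero_le)
qed

lemma P2:
  assumes n: "n \<ge> 1"
  shows "ennreal (norm (b y - mollify \<phi> n b y)) \<le> (\<integral>\<^sup>+ v. ennreal (moll \<phi> n v) * ennreal (norm (b y - b (y - v))) \<partial>lborel)"
proof -
  have m: "mollify \<phi> n b y = (\<integral> v. moll \<phi> n v *\<^sub>R b (y - v) \<partial>lborel)"
  proof -
    have "mollify \<phi> n b y = (\<integral> v. moll \<phi> n (y - (y - v)) *\<^sub>R b (y - v) \<partial>lborel)"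
      unfolding mollify_def by (rule integral_reflect) measurable
    then show ?thesis by simp
  qed
  have by': "b y = (\<integral> v. moll \<phi> n v *\<^sub>R b y \<partial>lborel)"
    using int_moll[OF n] integral_scaleR_left[of "b y" lborel "moll \<phi> n", OF moll_integrable[OF n]] by simp
  have i1: "integrable lborel (\<lambda>v. moll \<phi> n v *\<^sub>R b y)"
    using moll_integrable[OF n] by (rule integrable_scaleR_left)
  have "b y - mollify \<phi> n b y = (\<integral> v. moll \<phi> n v *\<^sub>R (b y - b (y - v)) \<partial>lborel)"
    unfolding m
    by (subst by') (simp add: Bochner_Integration.integral_diff[OF i1 integrable_moll_shift[OF n], symmetric] scaleR_diff_right)
  moreover have "integrable lborel (\<lambda>v. moll \<phi> n v *\<^sub>R (b y - b (y - v)))"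
    using Bochner_Integration.integrable_diff[OF i1 integrable_moll_shift[OF n, of y]] by (simp add: scaleR_diff_right)
  ultimately have "ennreal (norm (b y - mollify \<phi> n b y)) \<le> (\<integral>\<^sup>+ v. ennreal (norm (moll \<phi> n v *\<^sub>R (b y - b (y - v)))) \<partial>lborel)"
    using integral_norm_bound_ennreal by metis
  also have "\<dots> = (\<integral>\<^sup>+ v. ennreal (moll \<phi> n v) * ennreal (norm (b y - b (y - v))) \<partial>lborel)"
    using moll_nn by (intro nn_integral_cong) (simp add: ennreal_mult)
  finally show ?thesis .
qed

end


definition trunc :: "real \<Rightarrow> 'a::real_normed_vector \<Rightarrow> 'a" where
  "trunc M z = z /\<^sub>R max 1 (norm z / M)"

lemma trunc_cont: "continuous_on UNIV (trunc M :: 'a::real_normed_vector \<Rightarrow> 'a)"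
proof -
  have "\<And>z::'a. max 1 (norm z / M) \<noteq> 0" by (metis max.cobounded1 not_one_le_zero)
  show ?thesis
  proof (cases "M = 0")
    case True
    then have "trunc M = (\<lambda>z::'a. z)" unfolding trunc_def by (auto simp: fun_eq_iff)
    then show ?thesis using continuous_on_id by metis
  next
    case False
    then show ?thesis using \<open>\<And>z::'a. max 1 (norm z / M) \<noteq> 0\<close>
      unfolding trunc_def by (intro continuous_intros) auto
  qed
qed

lemma trunc_meas[measurable]: "trunc M \<in> borel_measurable borel"
  by (rule borel_measurable_continuous_onI[OF trunc_cont])

lemma trunc_bound: assumes "M > 0" shows "norm (trunc M z) \<le> M"
proof (cases "norm z \<le> M")
  case True
  have "max 1 (norm z / M) = 1" using True assms by (simp add: max_def divide_le_eq_1)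
  then show ?thesis unfolding trunc_def using True by simp
next
  case False
  then have n: "norm z > 0" using assms by linarith
  have "max 1 (norm z / M) = norm z / M" using False assms by (simp add: max_def le_divide_eq_1)
  then have "norm (trunc M z) = norm z / (norm z / M)" unfolding trunc_def using n assms by (simp add: abs_of_pos)
  also have "\<dots> = M" using n assms by (simp add: abs_of_pos)
  finally show ?thesis by simp
qed

lemma trunc_id: assumes "M > 0" "norm z \<le> M" shows "trunc M z = z"
proof -
  have "max 1 (norm z / M) = 1" using assms by (simp add: max_def divide_le_eq_1)
  then show ?thesis unfolding trunc_def by simp
qed

lemma trunc_diff_le: assumes "M > 0" shows "norm (z - trunc M z) \<le> norm z"
proof -
  define l where "l = max 1 (norm z / M)"
  have l: "l \<ge> 1" unfolding l_def by simp
  have "z - trunc M z = (1 - inverse l) *\<^sub>R z" unfolding trunc_def l_def[symmetric]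
    by (simp add: scaleR_diff_left)
  moreover have "0 \<le> 1 - inverse l" "1 - inverse l \<le> 1" using l by (auto simp: inverse_le_1_iff)
  ultimately show ?thesis using mult_right_mono[of "1 - inverse l" 1 "norm z"] by simp
qed

context setting begin

lemma b_measurable_on: "b measurable_on UNIV"
proof -
  have "b \<in> borel_measurable lebesgue" by (rule measurable_completion) simp
  then show ?thesis by (simp add: measurable_on_iff_borel_measurable lebesgue_on_UNIV_eq)
qed

lemma cont_approx:
  assumes e: "e > 0"
  obtains c h where "continuous_on UNIV c" "h \<in> borel_measurable borel"
    "\<And>y. norm (b y - c y) \<le> h y" "\<And>y. h y \<ge> 0"
    "(\<integral>\<^sup>+ y. ennreal (h y) * indicator (cball 0 R) y \<partial>lborel) \<le> ennreal e"
proof -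
  let ?B = "cball (0::'a) R"
  have fin: "(\<integral>\<^sup>+ y. ennreal (norm (b y)) * indicator ?B y \<partial>lborel) < \<infinity>"
    by (rule local_int_cball)
  have "(\<lambda>m. \<integral>\<^sup>+ y. ennreal (norm (b y - trunc (real (Suc m)) (b y))) * indicator ?B y \<partial>lborel)
        \<longlonglongrightarrow> (\<integral>\<^sup>+ y. 0 \<partial>(lborel :: 'a measure))"
  proof (rule nn_integral_dominated_convergence[where w="\<lambda>y. ennreal (norm (b y)) * indicator ?B y"
      and u="\<lambda>m y. ennreal (norm (b y - trunc (real (Suc m)) (b y))) * indicator ?B y" and u'="\<lambda>y. 0"])
    show "AE y in lborel. ennreal (norm (b y - trunc (real (Suc m)) (b y))) * indicator ?B y
               \<le> ennreal (norm (b y)) * indicator ?B y" for m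
      using trunc_diff_le[of "real (Suc m)"] by (intro AE_I2) (auto simp: indicator_def)
    show "AE y in lborel. (\<lambda>m. ennreal (norm (b y - trunc (real (Suc m)) (b y))) * indicator ?B y) \<longlonglongrightarrow> 0"
    proof (intro AE_I2 tendsto_eventually)
      fix y
      obtain m0 :: nat where "norm (b y) \<le> real m0" using real_arch_simple by blast
      then show "\<forall>\<^sub>F m in sequentially. ennreal (norm (b y - trunc (real (Suc m)) (b y))) * indicator ?B y = 0"
        unfolding eventually_sequentially
        by (intro exI[of _ m0]) (auto simp: trunc_id)
    qed
  qed (use fin in auto)
  then obtain m where m: "(\<integral>\<^sup>+ y. ennreal (norm (b y - trunc (real (Suc m)) (b y))) * indicator ?B y \<partial>lborel) < ennreal (e/2)"
    using e by (auto dest!: order_tendstoD(2)[of _ _ _ "ennreal (e/2)"] simp: eventually_sequentially) (metis order_refl)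
  define M where "M = real (Suc m)"
  have M: "M > 0" unfolding M_def by simp
  obtain Nn g where Nn: "negligible Nn" and g: "\<And>k. continuous_on UNIV (g k)"
    and lim: "\<And>y. y \<notin> Nn \<Longrightarrow> (\<lambda>k. g k y) \<longlonglongrightarrow> b y"
    using b_measurable_on unfolding measurable_on_def by auto
  have AEN: "AE y in lborel. y \<notin> Nn"
    using AE_not_in[of Nn lebesgue] Nn by (simp add: negligible_iff_null_sets AE_completion_iff)
  have fin2: "(\<integral>\<^sup>+ y. ennreal (2 * M) * indicator ?B y \<partial>lborel) < \<infinity>"
    using emeasure_bounded_finite[of "cball (0::'a) R"] by (simp add: nn_integral_cmult_indicator ennreal_mult_less_top)
  have "(\<lambda>k. \<integral>\<^sup>+ y. ennreal (norm (trunc M (b y) - trunc M (g k y))) * indicator ?B y \<partial>lborel)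
        \<longlonglongrightarrow> (\<integral>\<^sup>+ y. 0 \<partial>(lborel :: 'a measure))"
  proof (rule nn_integral_dominated_convergence[where w="\<lambda>y. ennreal (2 * M) * indicator ?B y"
      and u="\<lambda>k y. ennreal (norm (trunc M (b y) - trunc M (g k y))) * indicator ?B y" and u'="\<lambda>y. 0"])
    show "(\<lambda>y. ennreal (norm (trunc M (b y) - trunc M (g k y))) * indicator ?B y) \<in> borel_measurable lborel" for k
      using borel_measurable_continuous_onI[OF g[of k]] by measurable
    show "AE y in lborel. ennreal (norm (trunc M (b y) - trunc M (g k y))) * indicator ?B y
               \<le> ennreal (2 * M) * indicator ?B y" for k
    proof (intro AE_I2)
      fix y
      have "norm (trunc M (b y) - trunc M (g k y)) \<le> norm (trunc M (b y)) + norm (trunc M (g k y))"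
        by (rule norm_triangle_ineq4)
      also have "\<dots> \<le> 2 * M" using trunc_bound[OF M] by (smt (verit))
      finally show "ennreal (norm (trunc M (b y) - trunc M (g k y))) * indicator ?B y \<le> ennreal (2 * M) * indicator ?B y"
        by (auto simp: indicator_def ennreal_leI)
    qed
    show "AE y in lborel. (\<lambda>k. ennreal (norm (trunc M (b y) - trunc M (g k y))) * indicator ?B y) \<longlonglongrightarrow> 0"
      using AEN
    proof eventually_elim
      case (elim y)
      have "(\<lambda>k. trunc M (g k y)) \<longlonglongrightarrow> trunc M (b y)"
        using continuous_on_tendsto_compose[OF trunc_cont lim[OF elim]] by simp
      then have "(\<lambda>k. trunc M (b y) - trunc M (g k y)) \<longlonglongrightarrow> trunc M (b y) - trunc M (b y)"
        by (intro tendsto_diff tendsto_const)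
      then have "(\<lambda>k. norm (trunc M (b y) - trunc M (g k y))) \<longlonglongrightarrow> 0"
        using tendsto_norm_zero by fastforce
      then have "(\<lambda>k. ennreal (norm (trunc M (b y) - trunc M (g k y)))) \<longlonglongrightarrow> ennreal 0"
        by (rule tendsto_ennrealI)
      then show ?case by (auto simp: indicator_def)
    qed
  qed (use fin2 in auto)
  then obtain k where k: "(\<integral>\<^sup>+ y. ennreal (norm (trunc M (b y) - trunc M (g k y))) * indicator ?B y \<partial>lborel) < ennreal (e/2)"
    using e by (auto dest!: order_tendstoD(2)[of _ _ _ "ennreal (e/2)"] simp: eventually_sequentially) (metis order_refl)
  define c where "c = (\<lambda>y. trunc M (g k y))"
  define h where "h = (\<lambda>y. norm (b y - trunc M (b y)) + norm (trunc M (b y) - c y))"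
  have cc: "continuous_on UNIV c" unfolding c_def
    using continuous_on_compose[OF g[of k] continuous_on_subset[OF trunc_cont]] by (simp add: o_def)
  note cm[measurable] = borel_measurable_continuous_onI[OF cc]
  have hm: "h \<in> borel_measurable borel"
    unfolding h_def using borel_measurable_continuous_onI[OF cc] by measurable
  have "(\<integral>\<^sup>+ y. ennreal (h y) * indicator ?B y \<partial>lborel)
     = (\<integral>\<^sup>+ y. ennreal (norm (b y - trunc M (b y))) * indicator ?B y + ennreal (norm (trunc M (b y) - c y)) * indicator ?B y \<partial>lborel)"
    by (intro nn_integral_cong) (auto simp: h_def indicator_def ennreal_plus)
  also have "\<dots> = (\<integral>\<^sup>+ y. ennreal (norm (b y - trunc M (b y))) * indicator ?B y \<partial>lborel) + (\<integral>\<^sup>+ y. ennreal (norm (trunc M (b y) - c y)) * indicator ?B y \<partial>lborel)"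
    using borel_measurable_continuous_onI[OF cc] by (intro nn_integral_add; measurable)
  also have "\<dots> \<le> ennreal (e/2) + ennreal (e/2)"
    using m k unfolding M_def c_def by (intro add_mono) auto
  also have "\<dots> = ennreal e" using e by (simp flip: ennreal_plus)
  finally have I: "(\<integral>\<^sup>+ y. ennreal (h y) * indicator ?B y \<partial>lborel) \<le> ennreal e" .
  have Hb: "norm (b y - c y) \<le> h y" for y
    unfolding h_def using norm_triangle_ineq[of "b y - trunc M (b y)" "trunc M (b y) - c y"] by simp
  have Hn: "h y \<ge> 0" for y unfolding h_def by simp
  show ?thesis by (rule that[of c h, OF cc hm Hb Hn I])
qed

end


context setting begin

lemma transl_cont:
  assumes e: "e > 0"
  obtains \<eta> where "\<eta> > 0" "\<And>v. norm v < \<eta> \<Longrightarrow>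
     (\<integral>\<^sup>+ y. ennreal (norm (b y - b (y - v))) * indicator (cball 0 \<rho>) y \<partial>lborel) \<le> ennreal e"
proof -
  let ?B = "cball (0::'a) \<rho>" and ?B' = "cball (0::'a) (\<rho> + 1)"
  obtain c h where cc: "continuous_on UNIV c" and hm[measurable]: "h \<in> borel_measurable borel"
    and hb: "\<And>y. norm (b y - c y) \<le> h y" and hn: "\<And>y. h y \<ge> 0"
    and hI: "(\<integral>\<^sup>+ y. ennreal (h y) * indicator ?B' y \<partial>lborel) \<le> ennreal (e/3)"
    using cont_approx[of "e/3" "\<rho> + 1"] e by auto
  define \<mu> where "\<mu> = measure lborel ?B"
  have \<mu>0: "\<mu> \<ge> 0" unfolding \<mu>_def by simp
  have em: "emeasure lborel ?B = ennreal \<mu>"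
    unfolding \<mu>_def using emeasure_bounded_finite[of ?B] by (simp add: emeasure_eq_ennreal_measure)
  define e' where "e' = e / (3 * (\<mu> + 1))"
  have e'0: "e' > 0" unfolding e'_def using e \<mu>0 by simp
  have "uniformly_continuous_on ?B' c"
    by (rule compact_uniformly_continuous) (auto intro: continuous_on_subset[OF cc])
  then obtain \<eta>0 where \<eta>0: "\<eta>0 > 0" and uc: "\<And>x x'. x \<in> ?B' \<Longrightarrow> x' \<in> ?B' \<Longrightarrow> dist x' x < \<eta>0 \<Longrightarrow> dist (c x') (c x) < e'"
    unfolding uniformly_continuous_on_def using e'0 by metis
  show ?thesis
  proof (rule that[of "min \<eta>0 1"])
    show "min \<eta>0 1 > 0" using \<eta>0 by simp
    fix v :: 'a assume v: "norm v < min \<eta>0 1"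
    have pw: "ennreal (norm (b y - b (y - v))) * indicator ?B y \<le>
        ennreal (h y) * indicator ?B' y + ennreal (h (y - v)) * indicator ?B y + ennreal e' * indicator ?B y" for y
    proof (cases "y \<in> ?B")
      case True
      then have y1: "y \<in> ?B'" by auto
      have y2: "y - v \<in> ?B'" using True v norm_triangle_ineq4[of y v] by auto
      have "dist (c (y - v)) (c y) < e'" using uc[OF y1 y2] v by (simp add: dist_norm)
      then have "norm (c y - c (y - v)) \<le> e'" by (simp add: dist_norm norm_minus_commute)
      moreover have "norm (b y - b (y - v)) \<le> norm (b y - c y) + norm (c y - c (y - v)) + norm (b (y - v) - c (y - v))"
        using norm_triangle_ineq[of "b y - c y" "c y - c (y - v)"] norm_triangle_ineq[of "b y - c (y - v)" "c (y - v) - b (y - v)"]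
        by (simp add: norm_minus_commute)
      ultimately have "norm (b y - b (y - v)) \<le> h y + h (y - v) + e'"
        using hb[of y] hb[of "y - v"] by linarith
      then have "ennreal (norm (b y - b (y - v))) \<le> ennreal (h y) + ennreal (h (y - v)) + ennreal e'"
        using hn[of y] hn[of "y - v"] e'0 by (simp add: ennreal_plus[symmetric] ennreal_leI del: ennreal_plus)
      then show ?thesis using True y1 by simp
    qed simp
    have "(\<integral>\<^sup>+ y. ennreal (norm (b y - b (y - v))) * indicator ?B y \<partial>lborel)
       \<le> (\<integral>\<^sup>+ y. ennreal (h y) * indicator ?B' y + ennreal (h (y - v)) * indicator ?B y + ennreal e' * indicator ?B y \<partial>lborel)"
      by (rule nn_integral_mono[OF pw])
    also have "\<dots> = (\<integral>\<^sup>+ y. ennreal (h y) * indicator ?B' y \<partial>lborel) + (\<integral>\<^sup>+ y. ennreal (h (y - v)) * indicator ?B y \<partial>lborel)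
        + (\<integral>\<^sup>+ y. ennreal e' * indicator ?B y \<partial>lborel)"
    proof -
      have E1: "(\<integral>\<^sup>+ y. ennreal (h y) * indicator ?B' y + ennreal (h (y - v)) * indicator ?B y + ennreal e' * indicator ?B y \<partial>lborel)
          = (\<integral>\<^sup>+ y. ennreal (h y) * indicator ?B' y + ennreal (h (y - v)) * indicator ?B y \<partial>lborel) + (\<integral>\<^sup>+ y. ennreal e' * indicator ?B y \<partial>lborel)"
        by (rule nn_integral_add; measurable)
      have E2: "(\<integral>\<^sup>+ y. ennreal (h y) * indicator ?B' y + ennreal (h (y - v)) * indicator ?B y \<partial>lborel)
          = (\<integral>\<^sup>+ y. ennreal (h y) * indicator ?B' y \<partial>lborel) + (\<integral>\<^sup>+ y. ennreal (h (y - v)) * indicator ?B y \<partial>lborel)"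
        by (rule nn_integral_add; measurable)
      show ?thesis by (simp only: E1 E2)
    qed
    finally have main: "(\<integral>\<^sup>+ y. ennreal (norm (b y - b (y - v))) * indicator ?B y \<partial>lborel) \<le> (\<integral>\<^sup>+ y. ennreal (h y) * indicator ?B' y \<partial>lborel) + (\<integral>\<^sup>+ y. ennreal (h (y - v)) * indicator ?B y \<partial>lborel)
        + (\<integral>\<^sup>+ y. ennreal e' * indicator ?B y \<partial>lborel)" .
    have I2: "(\<integral>\<^sup>+ y. ennreal (h (y - v)) * indicator ?B y \<partial>lborel) \<le> ennreal (e/3)"
    proof -
      have "(\<integral>\<^sup>+ y. ennreal (h (y - v)) * indicator ?B y \<partial>lborel) = (\<integral>\<^sup>+ u. ennreal (h (u + v - v)) * indicator ?B (u + v) \<partial>lborel)"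
        by (rule nn_integral_shift) measurable
      also have "\<dots> \<le> (\<integral>\<^sup>+ u. ennreal (h u) * indicator ?B' u \<partial>lborel)"
      proof (intro nn_integral_mono)
        fix u show "ennreal (h (u + v - v)) * indicator ?B (u + v) \<le> ennreal (h u) * indicator ?B' u"
        proof (cases "u + v \<in> ?B")
          case True
          then have "u \<in> ?B'" using v norm_triangle_ineq4[of "u + v" v] by auto
          then show ?thesis using True by simp
        qed simp
      qed
      finally show ?thesis using hI by simp
    qed
    have I3: "(\<integral>\<^sup>+ y. ennreal e' * indicator ?B y \<partial>lborel) = ennreal (e' * \<mu>)"
      using em e'0 \<mu>0 by (simp add: nn_integral_cmult_indicator ennreal_mult)
    have "e' * \<mu> \<le> e / 3"
    proof -
      have "e' * \<mu> = (e / 3) * (\<mu> / (\<mu> + 1))" unfolding e'_def by (simp add: field_simps)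
      also have "\<dots> \<le> (e / 3) * 1" using \<mu>0 e by (intro mult_left_mono) auto
      finally show ?thesis by simp
    qed
    then have I4: "ennreal (e' * \<mu>) \<le> ennreal (e/3)" by (rule ennreal_leI)
    have "ennreal (e/3) + ennreal (e/3) + ennreal (e/3) = ennreal e"
      using e by (simp flip: ennreal_plus)
    show "(\<integral>\<^sup>+ y. ennreal (norm (b y - b (y - v))) * indicator ?B y \<partial>lborel) \<le> ennreal e"
    proof -
      have "(\<integral>\<^sup>+ y. ennreal (h y) * indicator ?B' y \<partial>lborel) + (\<integral>\<^sup>+ y. ennreal (h (y - v)) * indicator ?B y \<partial>lborel)
        + (\<integral>\<^sup>+ y. ennreal e' * indicator ?B y \<partial>lborel) \<le> ennreal (e/3) + ennreal (e/3) + ennreal (e/3)"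
        by (intro add_mono hI I2 order.trans[OF eq_refl[OF I3] I4])
      from order.trans[OF main this] show ?thesis
        by (simp only: \<open>ennreal (e/3) + ennreal (e/3) + ennreal (e/3) = ennreal e\<close>)
    qed
  qed
qed


lemma moll_L1:
  assumes e: "e > 0"
  obtains n0 :: nat where "n0 \<ge> 1" "\<And>n. n \<ge> n0 \<Longrightarrow>
     (\<integral>\<^sup>+ y. (\<integral>\<^sup>+ v. ennreal (moll \<phi> n v) * ennreal (norm (b y - b (y - v))) \<partial>lborel) * indicator (cball 0 \<rho>) y \<partial>lborel)
       \<le> ennreal e"
proof -
  let ?B = "cball (0::'a) \<rho>"
  obtain \<eta> where \<eta>: "\<eta> > 0" and tc: "\<And>v. norm v < \<eta> \<Longrightarrow>
     (\<integral>\<^sup>+ y. ennreal (norm (b y - b (y - v))) * indicator ?B y \<partial>lborel) \<le> ennreal e"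
    using transl_cont[OF e] by blast
  obtain k :: nat where k: "inverse (real (Suc k)) < \<eta>" using reals_Archimedean[OF \<eta>] by blast
  show ?thesis
  proof (rule that[of "Suc k"])
    show "Suc k \<ge> 1" by simp
    fix n assume n: "n \<ge> Suc k"
    then have n1: "n \<ge> 1" by simp
    have "(\<integral>\<^sup>+ y. (\<integral>\<^sup>+ v. ennreal (moll \<phi> n v) * ennreal (norm (b y - b (y - v))) \<partial>lborel) * indicator ?B y \<partial>lborel)
        = (\<integral>\<^sup>+ y. (\<integral>\<^sup>+ v. ennreal (moll \<phi> n v) * (ennreal (norm (b y - b (y - v))) * indicator ?B y) \<partial>lborel) \<partial>lborel)"
      by (subst nn_integral_multc[symmetric]) (auto simp: mult.assoc)
    also have "\<dots> = (\<integral>\<^sup>+ v. (\<integral>\<^sup>+ y. ennreal (moll \<phi> n v) * (ennreal (norm (b y - b (y - v))) * indicator ?B y) \<partial>lborel) \<partial>lborel)"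
      by (rule lborel_pair.Fubini') measurable
    also have "\<dots> = (\<integral>\<^sup>+ v. ennreal (moll \<phi> n v) * (\<integral>\<^sup>+ y. ennreal (norm (b y - b (y - v))) * indicator ?B y \<partial>lborel) \<partial>lborel)"
      by (intro nn_integral_cong nn_integral_cmult) measurable
    also have "\<dots> \<le> (\<integral>\<^sup>+ v. ennreal (moll \<phi> n v) * ennreal e \<partial>lborel)"
    proof (intro nn_integral_mono)
      fix v
      show "ennreal (moll \<phi> n v) * (\<integral>\<^sup>+ y. ennreal (norm (b y - b (y - v))) * indicator ?B y \<partial>lborel) \<le> ennreal (moll \<phi> n v) * ennreal e"
      proof (cases "norm v < 1 / real n")
        case True
        have "1 / real n \<le> inverse (real (Suc k))" using n by (simp add: field_simps)
        then have "norm v < \<eta>" using True k by linarith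
        then show ?thesis by (intro mult_left_mono tc) auto
      next
        case False
        then show ?thesis using moll_zero[OF n1, of v] by simp
      qed
    qed
    also have "\<dots> = ennreal e"
      using nn_moll[OF n1] by (subst nn_integral_multc) auto
    finally show "(\<integral>\<^sup>+ y. (\<integral>\<^sup>+ v. ennreal (moll \<phi> n v) * ennreal (norm (b y - b (y - v))) \<partial>lborel) * indicator ?B y \<partial>lborel) \<le> ennreal e" .
  qed
qed

end


lemma dyadic_choice:
  fixes t :: real assumes "t \<ge> 1"
  obtains k :: nat where "2 ^ k \<le> t" "t \<le> 2 * 2 ^ k"
proof -
  define L where "L = log 2 t"
  have L0: "L \<ge> 0" unfolding L_def using assms by simp
  define k where "k = nat \<lfloor>L\<rfloor>"
  have kL: "real k \<le> L" "L < real k + 1" unfolding k_def using L0 by linarith+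
  have "2 ^ k = 2 powr real k" by (simp add: powr_realpow)
  also have "\<dots> \<le> 2 powr L" using kL by simp
  also have "\<dots> = t" unfolding L_def using assms by simp
  finally have 1: "2 ^ k \<le> t" .
  have "t = 2 powr L" unfolding L_def using assms by simp
  also have "\<dots> \<le> 2 powr (real k + 1)" using kL by simp
  also have "\<dots> = 2 * 2 ^ k" by (simp add: powr_add powr_realpow)
  finally show ?thesis using that 1 by blast
qed

lemma tail_integral:
  fixes p \<rho> :: real
  assumes \<rho>: "\<rho> > 0" and p: "p > real DIM('a)"
  defines "q \<equiv> 2 powr (real DIM('a) - p)"
  shows "(\<integral>\<^sup>+ v. ennreal (1 / norm v powr p) * indicator {v::'a::euclidean_space. \<rho> \<le> norm v} v \<partial>lborel)
     \<le> ennreal (unit_ball_vol (DIM('a)) * 2 ^ DIM('a) * \<rho> powr (real DIM('a) - p) / (1 - q))"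
proof -
  let ?d = "real DIM('a)"
  define V where "V = unit_ball_vol ?d"
  have V: "V > 0" unfolding V_def by simp
  have q: "0 < q" "q < 1" unfolding q_def using p powr_less_mono[of "real DIM('a) - p" 0 2] by auto
  define a where "a = (\<lambda>k::nat. \<rho> * 2 ^ k)"
  have a: "a k > 0" for k unfolding a_def using \<rho> by simp
  define T where "T = (\<lambda>k v. ennreal (a k powr (- p)) * indicator (cball (0::'a) (2 * a k)) v)"
  have pw: "ennreal (1 / norm v powr p) * indicator {v::'a. \<rho> \<le> norm v} v \<le> (\<Sum>k. T k v)" for v
  proof (cases "\<rho> \<le> norm v")
    case True
    then have t1: "norm v / \<rho> \<ge> 1" using \<rho> by simp
    obtain k where k: "2 ^ k \<le> norm v / \<rho>" "norm v / \<rho> \<le> 2 * 2 ^ k" using dyadic_choice[OF t1] by blast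
    have ak: "a k \<le> norm v" "norm v \<le> 2 * a k" using k \<rho> unfolding a_def by (auto simp: field_simps)
    have "1 / norm v powr p \<le> 1 / a k powr p"
    proof -
      have "0 < norm v" using ak a[of k] by linarith
      then have "0 < norm v powr p * a k powr p" using a[of k] by simp
      then show ?thesis using ak a[of k] p by (intro divide_left_mono powr_mono2) auto
    qed
    also have "\<dots> = a k powr (- p)" by (simp add: powr_minus divide_inverse)
    finally have "ennreal (1 / norm v powr p) * indicator {v::'a. \<rho> \<le> norm v} v \<le> T k v"
      unfolding T_def using ak True by (simp add: ennreal_leI)
    also have "T k v \<le> (\<Sum>k. T k v)"
      using sum_le_suminf[of "\<lambda>k. T k v" "{k}"] by simp
    finally show ?thesis .
  qed simp
  have "(\<integral>\<^sup>+ v. ennreal (1 / norm v powr p) * indicator {v::'a. \<rho> \<le> norm v} v \<partial>lborel) \<le> (\<integral>\<^sup>+ v. (\<Sum>k. T k v) \<partial>lborel)"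
    by (intro nn_integral_mono pw)
  also have "\<dots> = (\<Sum>k. \<integral>\<^sup>+ v. T k v \<partial>lborel)"
  proof (rule nn_integral_suminf)
    fix k
    have "indicator (cball (0::'a) (2 * a k)) \<in> borel_measurable lborel"
      by (rule borel_measurable_indicator) simp
    then show "T k \<in> borel_measurable lborel" unfolding T_def
      by (intro borel_measurable_times_ennreal borel_measurable_const) auto
  qed
  also have "\<dots> = (\<Sum>k. ennreal (V * 2 ^ DIM('a) * \<rho> powr (?d - p) * q ^ k))"
  proof (intro suminf_cong)
    fix k
    have "(\<integral>\<^sup>+ v. T k v \<partial>lborel) = ennreal (a k powr (- p)) * emeasure lborel (cball (0::'a) (2 * a k))"
      unfolding T_def by (rule nn_integral_cmult_indicator) simp
    also have "\<dots> = ennreal (a k powr (- p) * (V * (2 * a k) ^ DIM('a)))"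
    proof -
      have "emeasure lborel (cball (0::'a) (2 * a k)) = ennreal (V * (2 * a k) ^ DIM('a))"
        unfolding V_def by (rule emeasure_cball) (use a[of k] in simp)
      moreover have "ennreal (a k powr (- p)) * ennreal (V * (2 * a k) ^ DIM('a)) = ennreal (a k powr (- p) * (V * (2 * a k) ^ DIM('a)))"
        by (rule ennreal_mult[symmetric]) (use a[of k] V in auto)
      ultimately show ?thesis by simp
    qed
    also have "a k powr (- p) * (V * (2 * a k) ^ DIM('a)) = V * 2 ^ DIM('a) * \<rho> powr (?d - p) * q ^ k"
    proof -
      have "(2 * a k) ^ DIM('a) = 2 ^ DIM('a) * a k powr ?d"
        using a[of k] by (simp add: power_mult_distrib powr_realpow)
      moreover have "a k powr (- p) * a k powr ?d = a k powr (?d - p)"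
        by (simp add: powr_add[symmetric])
      moreover have "a k powr (?d - p) = \<rho> powr (?d - p) * q ^ k"
      proof -
        have "a k powr (?d - p) = \<rho> powr (?d - p) * (2 ^ k) powr (?d - p)"
          unfolding a_def using \<rho> by (simp add: powr_mult)
        moreover have "(2 ^ k :: real) powr (?d - p) = q ^ k"
        proof -
          have e1: "(2 ^ k :: real) = 2 powr real k" by (simp add: powr_realpow)
          have "(2 ^ k :: real) powr (?d - p) = 2 powr (real k * (?d - p))" unfolding e1 by (rule powr_powr)
          also have "\<dots> = (2 powr (?d - p)) powr real k" by (simp add: powr_powr mult.commute)
          also have "\<dots> = q ^ k" unfolding q_def by (rule powr_realpow) simp
          finally show ?thesis .
        qed
        ultimately show ?thesis by simp
      qed
      ultimately show ?thesis by (simp add: algebra_simps)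
    qed
    finally show "(\<integral>\<^sup>+ v. T k v \<partial>lborel) = ennreal (V * 2 ^ DIM('a) * \<rho> powr (?d - p) * q ^ k)" .
  qed
  also have "\<dots> = ennreal (\<Sum>k. V * 2 ^ DIM('a) * \<rho> powr (?d - p) * q ^ k)"
    using q V \<rho> by (intro suminf_ennreal2) (auto intro!: summable_mult summable_geometric)
  also have "(\<Sum>k. V * 2 ^ DIM('a) * \<rho> powr (?d - p) * q ^ k) = V * 2 ^ DIM('a) * \<rho> powr (?d - p) / (1 - q)"
    using suminf_mult[OF summable_geometric[of q], of "V * 2 ^ DIM('a) * \<rho> powr (?d - p)"] q
      suminf_geometric[of q] by (simp add: divide_inverse)
  finally show ?thesis unfolding V_def .
qed


context setting begin

lemma far_small:
  assumes p: "p > real DIM('a)" and e: "e > 0"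
  obtains R where "R > 0" "\<And>x. (\<integral>\<^sup>+ y. ennreal (norm (b y)) * (ennreal (1 / norm (x - y) powr p) * indicator {z. R \<le> norm z} (x - y)) \<partial>lborel) \<le> ennreal e"
proof -
  let ?d = "real DIM('a)"
  obtain r0 where r0: "0 < r0" "r0 \<le> 1" "Kf r0 < 1" using Kf_small[of 1] by auto
  define \<psi> :: "'a \<Rightarrow> ennreal" where "\<psi> = indicator (ball 0 r0 - {0})"
  have \<psi>m[measurable]: "\<psi> \<in> borel_measurable borel" unfolding \<psi>_def
    by (rule borel_measurable_indicator) auto
  have S: "(\<integral>\<^sup>+ y. ennreal (norm (b y)) * \<psi> (x' - y) \<partial>lborel) \<le> ennreal (r0 powr (?d - 1))" for x'
    unfolding \<psi>_def using local_bound_punct[of r0 x'] r0 by simp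
  define \<mu>0 where "\<mu>0 = unit_ball_vol ?d * r0 ^ DIM('a)"
  have \<mu>0: "\<mu>0 > 0" unfolding \<mu>0_def using r0 by simp
  define q where "q = 2 powr (?d - p)"
  have q: "q < 1" unfolding q_def using p powr_less_mono[of "?d - p" 0 2] by auto
  define A where "A = unit_ball_vol ?d * 2 ^ DIM('a) / (1 - q)"
  have A: "A > 0" unfolding A_def using q by simp
  define C where "C = 2 powr p / \<mu>0"
  have C: "C > 0" unfolding C_def using \<mu>0 by simp
  define K where "K = C * A * r0 powr (?d - 1)"
  have K: "K > 0" unfolding K_def using A C r0 by simp
  have "((\<lambda>\<rho>::real. \<rho> powr (?d - p)) \<longlongrightarrow> 0) at_top"
    using p by (intro tendsto_neg_powr filterlim_ident) auto
  then have "eventually (\<lambda>\<rho>::real. \<rho> powr (?d - p) < e / K) at_top"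
    using e K by (intro order_tendstoD(2)) auto
  then obtain \<rho>0 where \<rho>0: "\<And>\<rho>. \<rho> \<ge> \<rho>0 \<Longrightarrow> \<rho> powr (?d - p) < e / K"
    unfolding eventually_at_top_linorder by blast
  define \<rho> where "\<rho> = max \<rho>0 1"
  have \<rho>: "\<rho> \<ge> 1" "\<rho> powr (?d - p) < e / K" unfolding \<rho>_def using \<rho>0 by auto
  define R where "R = 2 * \<rho>"
  define G where "G = (\<lambda>v::'a. ennreal (1 / norm v powr p) * indicator {v. \<rho> \<le> norm v} v)"
  have Gm[measurable]: "G \<in> borel_measurable borel" unfolding G_def by measurable
  have GI: "(\<integral>\<^sup>+ v. G v \<partial>lborel) \<le> ennreal (A * \<rho> powr (?d - p))"
    unfolding G_def A_def q_def using tail_integral[of \<rho> p] \<rho> p by (simp add: field_simps)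
  have kb: "ennreal (1 / norm z powr p) * indicator {z. R \<le> norm z} z \<le> (\<integral>\<^sup>+ v. (ennreal C * G v) * \<psi> (z - v) \<partial>lborel)" for z
  proof (cases "R \<le> norm z")
    case True
    have z0: "norm z > 0" using True \<rho> unfolding R_def by linarith
    define c where "c = C * (1 / (2 * norm z) powr p)"
    have "(\<integral>\<^sup>+ v. ennreal c * indicator (ball z r0 - {z}) v \<partial>lborel) \<le> (\<integral>\<^sup>+ v. (ennreal C * G v) * \<psi> (z - v) \<partial>lborel)"
    proof (intro nn_integral_mono)
      fix v
      show "ennreal c * indicator (ball z r0 - {z}) v \<le> (ennreal C * G v) * \<psi> (z - v)"
      proof (cases "v \<in> ball z r0 - {z}")
        case True
        then have zv: "norm (z - v) < r0" "z - v \<noteq> 0" by (auto simp: dist_norm)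
        have n1: "norm v \<ge> \<rho>" using norm_triangle_ineq2[of z v] zv \<open>R \<le> norm z\<close> r0 \<rho>
          unfolding R_def by simp
        have n2: "norm v \<le> 2 * norm z" using norm_triangle_ineq4[of z "z - v"] zv \<open>R \<le> norm z\<close> r0 \<rho>
          norm_triangle_ineq[of z "v - z"] unfolding R_def by (simp add: norm_minus_commute)
        have nv: "norm v > 0" using n1 \<rho> by linarith
        have "1 / (2 * norm z) powr p \<le> 1 / norm v powr p"
          using n2 nv z0 p by (intro divide_left_mono powr_mono2) auto
        then have "c \<le> C * (1 / norm v powr p)" unfolding c_def using C by (intro mult_left_mono) auto
        then have "ennreal c \<le> ennreal C * ennreal (1 / norm v powr p)"
          using C by (simp add: ennreal_mult[symmetric] ennreal_leI del: ennreal_mult ennreal_mult')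
        then show ?thesis using True zv n1 unfolding G_def \<psi>_def by simp
      qed simp
    qed
    moreover have "(\<integral>\<^sup>+ v. ennreal c * indicator (ball z r0 - {z}) v \<partial>lborel) = ennreal c * ennreal \<mu>0"
    proof -
      have "emeasure lborel (ball z r0 - {z}) = emeasure lborel (ball z r0)"
        by (rule emeasure_Diff_null_set) auto
      also have "\<dots> = ennreal \<mu>0" unfolding \<mu>0_def by (rule emeasure_ball) (use r0 in simp)
      finally show ?thesis by (subst nn_integral_cmult_indicator) auto
    qed
    moreover have "c * \<mu>0 = 1 / norm z powr p"
      unfolding c_def C_def using \<mu>0 z0 by (simp add: powr_mult field_simps)
    ultimately show ?thesis using True C \<mu>0 z0 unfolding c_def
      by (simp add: ennreal_mult[symmetric] del: ennreal_mult ennreal_mult')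
  qed simp
  show ?thesis
  proof (rule that[of R])
    show "R > 0" unfolding R_def using \<rho> by simp
    fix x
    have "(\<integral>\<^sup>+ y. ennreal (norm (b y)) * (ennreal (1 / norm (x - y) powr p) * indicator {z. R \<le> norm z} (x - y)) \<partial>lborel)
       \<le> (\<integral>\<^sup>+ y. ennreal (norm (b y)) * (\<integral>\<^sup>+ v. (ennreal C * G v) * \<psi> (x - y - v) \<partial>lborel) \<partial>lborel)"
      by (intro nn_integral_mono mult_left_mono kb) auto
    also have "\<dots> \<le> (\<integral>\<^sup>+ v. ennreal C * G v \<partial>lborel) * ennreal (r0 powr (?d - 1))"
      by (rule conv_bound2[OF _ _ _ S]) measurable
    also have "(\<integral>\<^sup>+ v. ennreal C * G v \<partial>lborel) = ennreal C * (\<integral>\<^sup>+ v. G v \<partial>lborel)"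
      by (rule nn_integral_cmult) measurable
    also have "ennreal C * (\<integral>\<^sup>+ v. G v \<partial>lborel) * ennreal (r0 powr (?d - 1))
        \<le> ennreal C * ennreal (A * \<rho> powr (?d - p)) * ennreal (r0 powr (?d - 1))"
      by (intro mult_right_mono mult_left_mono GI) auto
    also have "\<dots> = ennreal (K * \<rho> powr (?d - p))"
      unfolding K_def using C A by (simp add: ennreal_mult[symmetric] mult_ac del: ennreal_mult ennreal_mult')
    also have "\<dots> \<le> ennreal e"
    proof (rule ennreal_leI)
      have "K * \<rho> powr (?d - p) \<le> K * (e / K)" using \<rho> K by (intro mult_left_mono) auto
      then show "K * \<rho> powr (?d - p) \<le> e" using K by simp
    qed
    finally show "(\<integral>\<^sup>+ y. ennreal (norm (b y)) * (ennreal (1 / norm (x - y) powr p) * indicator {z. R \<le> norm z} (x - y)) \<partial>lborel) \<le> ennreal e" .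
  qed
qed

end


lemma Hker_nonneg: "r \<ge> 0 \<Longrightarrow> Hker \<beta> r z \<ge> 0"
  unfolding Hker_def by simp

lemma Hker_split:
  fixes z :: "'a::euclidean_space"
  assumes t: "0 < t" "t \<le> T" and \<beta>: "\<beta> \<ge> 0" and \<delta>: "\<delta> > 0" and R: "R > 0"
  defines "p \<equiv> real DIM('a) - 1 + 2 * \<beta>"
  shows "Hker \<beta> t z \<le> (if norm z < \<delta> then norm z powr (1 - real DIM('a)) else 0)
     + (if norm z \<le> R then \<delta> powr (1 - real DIM('a)) else 0)
     + (if R \<le> norm z then T powr \<beta> * (1 / norm z powr p) else 0)"
proof -
  let ?d = "real DIM('a)"
  have d1: "1 - ?d \<le> 0" using DIM_positive[where 'a='a] by linarith
  have nn: "0 \<le> (if norm z < \<delta> then norm z powr (1 - ?d) else 0)"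
    "0 \<le> (if norm z \<le> R then \<delta> powr (1 - ?d) else 0)"
    "0 \<le> (if R \<le> norm z then T powr \<beta> * (1 / norm z powr p) else 0)" by auto
  have H1: "Hker \<beta> t z \<le> norm z powr (1 - ?d)" unfolding Hker_def by simp
  have H2: "Hker \<beta> t z \<le> t powr \<beta> / norm z powr p" unfolding Hker_def p_def by simp
  show ?thesis
  proof (cases "z = 0")
    case True
    then have "Hker \<beta> t z = 0" unfolding Hker_def by simp
    then show ?thesis using nn by linarith
  next
    case False
    then have z0: "norm z > 0" by simp
    consider "norm z < \<delta>" | "\<delta> \<le> norm z" "norm z \<le> R" | "R < norm z" by linarith
    then show ?thesis
    proof cases
      case 1 then show ?thesis using H1 nn by simp
    next
      case 2
      have "norm z powr (1 - ?d) \<le> \<delta> powr (1 - ?d)" by (rule powr_mono2'[OF d1 \<delta> 2(1)])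
      then show ?thesis using H1 nn 2 by simp
    next
      case 3
      have "t powr \<beta> \<le> T powr \<beta>" using t \<beta> by (intro powr_mono2) auto
      then have "t powr \<beta> / norm z powr p \<le> T powr \<beta> / norm z powr p"
        by (intro divide_right_mono) auto
      then show ?thesis using H2 nn 3 by simp
    qed
  qed
qed

lemma ennreal_tendsto_0I:
  fixes f :: "nat \<Rightarrow> ennreal"
  assumes "\<And>e. e > 0 \<Longrightarrow> eventually (\<lambda>n. f n \<le> ennreal e) sequentially"
  shows "f \<longlonglongrightarrow> 0"
proof (rule order_tendstoI)
  fix a :: ennreal assume a: "0 < a"
  obtain c where c: "0 < c" "c < a" using dense[OF a] by blast
  then have ct: "c < top" using top.not_eq_extremum by fastforce
  define e where "e = enn2real c"
  have e: "e > 0" "ennreal e = c" unfolding e_def using c ct by (auto simp: enn2real_positive_iff)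
  show "eventually (\<lambda>n. f n < a) sequentially"
    using assms[OF e(1)] by eventually_elim (use c e in auto)
qed auto

context setting begin

definition F2 :: "nat \<Rightarrow> 'a \<Rightarrow> ennreal" where
  "F2 n y = (\<integral>\<^sup>+ v. ennreal (moll \<phi> n v) * ennreal (norm (b y - b (y - v))) \<partial>lborel)"

lemma F2_meas[measurable]: "F2 n \<in> borel_measurable borel"
  unfolding F2_def[abs_def]
  by (rule lborel.borel_measurable_nn_integral[where N=lborel, simplified]) measurable

lemma bound_part:
  assumes n: "n \<ge> 1" and km[measurable]: "k \<in> borel_measurable borel"
    and S: "\<And>x'. (\<integral>\<^sup>+ y. ennreal (norm (b y)) * k (x' - y) \<partial>lborel) \<le> S"
  shows "(\<integral>\<^sup>+ y. (ennreal (norm (b y)) + Mo n y) * k (x - y) \<partial>lborel) \<le> S + S"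
proof -
  have "(\<integral>\<^sup>+ y. (ennreal (norm (b y)) + Mo n y) * k (x - y) \<partial>lborel)
     = (\<integral>\<^sup>+ y. ennreal (norm (b y)) * k (x - y) \<partial>lborel) + (\<integral>\<^sup>+ y. Mo n y * k (x - y) \<partial>lborel)"
    by (simp add: distrib_right nn_integral_add)
  also have "(\<integral>\<^sup>+ y. Mo n y * k (x - y) \<partial>lborel) \<le> (\<integral>\<^sup>+ v. ennreal (moll \<phi> n v) \<partial>lborel) * S"
    unfolding Mo_def by (rule conv_bound[OF _ _ _ S]) measurable
  also have "(\<integral>\<^sup>+ v. ennreal (moll \<phi> n v) \<partial>lborel) = 1" by (rule nn_moll[OF n])
  finally have *: "(\<integral>\<^sup>+ y. (ennreal (norm (b y)) + Mo n y) * k (x - y) \<partial>lborel) \<le> (\<integral>\<^sup>+ y. ennreal (norm (b y)) * k (x - y) \<partial>lborel) + S" by simp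
  show ?thesis by (rule order.trans[OF * add_right_mono[OF S[of x]]])
qed

end


context setting begin

lemma Hf_bound:
  assumes \<beta>: "\<beta> > 1/2" and e: "e > 0" and T: "T > 0"
  obtains n0 where "\<And>n t x. n \<ge> n0 \<Longrightarrow> 0 < t \<Longrightarrow> t \<le> T \<Longrightarrow> norm x \<le> X \<Longrightarrow>
      Hf (\<lambda>y. b y - mollify \<phi> n b y) \<beta> t x \<le> ennreal (5 * e)"
proof -
  let ?d = "real DIM('a)"
  define p where "p = ?d - 1 + 2 * \<beta>"
  have p: "p > ?d" unfolding p_def using \<beta> by simp
  obtain \<delta> where \<delta>: "0 < \<delta>" "\<delta> \<le> 1" "Kf \<delta> < ennreal e" using Kf_small[of "ennreal e"] e by auto
  define e0 where "e0 = e / T powr \<beta>"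
  have e0: "e0 > 0" unfolding e0_def using e T by simp
  obtain R where R: "R > 0" and far: "\<And>x. (\<integral>\<^sup>+ y. ennreal (norm (b y)) * (ennreal (1 / norm (x - y) powr p) * indicator {z. R \<le> norm z} (x - y)) \<partial>lborel) \<le> ennreal e0"
    using far_small[OF p e0] by blast
  define kf where "kf = (\<lambda>z::'a. ennreal (1 / norm z powr p) * indicator {z. R \<le> norm z} z)"
  have kfm[measurable]: "kf \<in> borel_measurable borel" unfolding kf_def by measurable
  define k13 where "k13 = (\<lambda>z. knear \<delta> z + ennreal (T powr \<beta>) * kf z)"
  have k13m[measurable]: "k13 \<in> borel_measurable borel" unfolding k13_def by measurable
  define k2 where "k2 = (\<lambda>z::'a. ennreal (\<delta> powr (1 - ?d)) * indicator (cball 0 R) z)"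
  have S13: "(\<integral>\<^sup>+ y. ennreal (norm (b y)) * k13 (x' - y) \<partial>lborel) \<le> ennreal e + ennreal e" for x'
  proof -
    have "(\<integral>\<^sup>+ y. ennreal (norm (b y)) * k13 (x' - y) \<partial>lborel)
       = (\<integral>\<^sup>+ y. ennreal (norm (b y)) * knear \<delta> (x' - y) + ennreal (T powr \<beta>) * (ennreal (norm (b y)) * kf (x' - y)) \<partial>lborel)"
      by (intro nn_integral_cong) (simp add: k13_def distrib_left mult.left_commute)
    also have "\<dots> = (\<integral>\<^sup>+ y. ennreal (norm (b y)) * knear \<delta> (x' - y) \<partial>lborel) + ennreal (T powr \<beta>) * (\<integral>\<^sup>+ y. ennreal (norm (b y)) * kf (x' - y) \<partial>lborel)"
    proof -
      have A: "(\<integral>\<^sup>+ y. ennreal (norm (b y)) * knear \<delta> (x' - y) + ennreal (T powr \<beta>) * (ennreal (norm (b y)) * kf (x' - y)) \<partial>lborel)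
        = (\<integral>\<^sup>+ y. ennreal (norm (b y)) * knear \<delta> (x' - y) \<partial>lborel) + (\<integral>\<^sup>+ y. ennreal (T powr \<beta>) * (ennreal (norm (b y)) * kf (x' - y)) \<partial>lborel)"
        by (rule nn_integral_add; measurable)
      have B: "(\<integral>\<^sup>+ y. ennreal (T powr \<beta>) * (ennreal (norm (b y)) * kf (x' - y)) \<partial>lborel)
        = ennreal (T powr \<beta>) * (\<integral>\<^sup>+ y. ennreal (norm (b y)) * kf (x' - y) \<partial>lborel)"
        by (rule nn_integral_cmult) measurable
      show ?thesis by (simp only: A B)
    qed
    also have "\<dots> \<le> ennreal e + ennreal (T powr \<beta>) * ennreal e0"
      using knear_le[of \<delta> x'] \<delta> far[of x'] unfolding kf_def
      by (intro add_mono mult_left_mono) auto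
    also have "ennreal (T powr \<beta>) * ennreal e0 = ennreal e"
      unfolding e0_def using T e by (simp add: ennreal_mult[symmetric] del: ennreal_mult ennreal_mult')
    finally show ?thesis .
  qed
  obtain n0 where n0: "n0 \<ge> 1" and L1: "\<And>n. n \<ge> n0 \<Longrightarrow>
     (\<integral>\<^sup>+ y. F2 n y * indicator (cball 0 (X + R)) y \<partial>lborel) \<le> ennreal (e * \<delta> powr (?d - 1))"
    using moll_L1[of "e * \<delta> powr (?d - 1)" "X + R"] e \<delta> unfolding F2_def by auto
  show ?thesis
  proof (rule that[of n0])
    fix n :: nat and t :: real and x :: 'a assume n: "n \<ge> n0" and t: "0 < t" "t \<le> T" and x: "norm x \<le> X"
    have n1: "n \<ge> 1" using n n0 by simp
    have pw: "ennreal (norm (b y - mollify \<phi> n b y) * Hker \<beta> t (x - y))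
        \<le> (ennreal (norm (b y)) + Mo n y) * k13 (x - y) + F2 n y * k2 (x - y)" for y
    proof -
      define a where "a = norm (b y - mollify \<phi> n b y)"
      define z where "z = x - y"
      define h1 where "h1 = (if norm z < \<delta> then norm z powr (1 - ?d) else 0)"
      define h2 where "h2 = (if norm z \<le> R then \<delta> powr (1 - ?d) else 0)"
      define h3 where "h3 = (if R \<le> norm z then T powr \<beta> * (1 / norm z powr p) else 0)"
      have hn: "h1 \<ge> 0" "h2 \<ge> 0" "h3 \<ge> 0" "a \<ge> 0" unfolding h1_def h2_def h3_def a_def by auto
      have H: "Hker \<beta> t z \<le> h1 + h2 + h3"
        unfolding h1_def h2_def h3_def p_def using Hker_split[OF t _ \<delta>(1) R, of \<beta> z] \<beta> by simp
      have "a * Hker \<beta> t z \<le> a * (h1 + h2 + h3)" using H hn by (intro mult_left_mono) auto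
      then have "ennreal (a * Hker \<beta> t z) \<le> ennreal (a * (h1 + h2 + h3))" by (rule ennreal_leI)
      also have "\<dots> = ennreal a * (ennreal h1 + ennreal h3) + ennreal a * ennreal h2"
      proof -
        have e1: "a * (h1 + h2 + h3) = a * (h1 + h3) + a * h2" by (simp add: algebra_simps)
        have e2: "ennreal (a * (h1 + h3) + a * h2) = ennreal (a * (h1 + h3)) + ennreal (a * h2)"
          by (rule ennreal_plus) (use hn in auto)
        have e3: "ennreal (a * (h1 + h3)) = ennreal a * ennreal (h1 + h3)"
          by (rule ennreal_mult) (use hn in auto)
        have e4: "ennreal (h1 + h3) = ennreal h1 + ennreal h3"
          by (rule ennreal_plus) (use hn in auto)
        have e5: "ennreal (a * h2) = ennreal a * ennreal h2"
          by (rule ennreal_mult) (use hn in auto)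
        show ?thesis by (simp only: e1 e2 e3 e4 e5)
      qed
      also have "ennreal h1 + ennreal h3 = k13 z"
      proof -
        have "ennreal h1 = knear \<delta> z" unfolding h1_def knear_def by (simp add: indicator_def)
        moreover have "ennreal h3 = ennreal (T powr \<beta>) * kf z"
        proof (cases "R \<le> norm z")
          case True
          have "ennreal (T powr \<beta> * (1 / norm z powr p)) = ennreal (T powr \<beta>) * ennreal (1 / norm z powr p)"
            by (rule ennreal_mult) auto
          then show ?thesis unfolding h3_def kf_def using True by simp
        qed (simp add: h3_def kf_def)
        ultimately show ?thesis unfolding k13_def by simp
      qed
      also have "ennreal h2 = k2 z" unfolding k2_def h2_def by (simp add: indicator_def)
      also have "ennreal a * k13 z + ennreal a * k2 z \<le> (ennreal (norm (b y)) + Mo n y) * k13 z + F2 n y * k2 z"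
      proof (intro add_mono mult_right_mono)
        have "a \<le> norm (b y) + norm (mollify \<phi> n b y)" unfolding a_def by (rule norm_triangle_ineq4)
        then have "ennreal a \<le> ennreal (norm (b y)) + ennreal (norm (mollify \<phi> n b y))"
          by (simp add: ennreal_plus[symmetric] ennreal_leI del: ennreal_plus)
        also have "\<dots> \<le> ennreal (norm (b y)) + Mo n y" by (intro add_left_mono P1)
        finally show "ennreal a \<le> ennreal (norm (b y)) + Mo n y" .
        show "ennreal a \<le> F2 n y" unfolding a_def F2_def by (rule P2[OF n1])
      qed auto
      finally have fin: "ennreal (a * Hker \<beta> t z) \<le> (ennreal (norm (b y)) + Mo n y) * k13 z + F2 n y * k2 z" .
      show ?thesis using fin unfolding a_def z_def .
    qed
    have "Hf (\<lambda>y. b y - mollify \<phi> n b y) \<beta> t x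
        \<le> (\<integral>\<^sup>+ y. (ennreal (norm (b y)) + Mo n y) * k13 (x - y) + F2 n y * k2 (x - y) \<partial>lborel)"
      unfolding Hf_def by (intro nn_integral_mono pw)
    also have "\<dots> = (\<integral>\<^sup>+ y. (ennreal (norm (b y)) + Mo n y) * k13 (x - y) \<partial>lborel) + (\<integral>\<^sup>+ y. F2 n y * k2 (x - y) \<partial>lborel)"
      unfolding k2_def by (rule nn_integral_add; measurable)
    finally have HI: "Hf (\<lambda>y. b y - mollify \<phi> n b y) \<beta> t x \<le> (\<integral>\<^sup>+ y. (ennreal (norm (b y)) + Mo n y) * k13 (x - y) \<partial>lborel) + (\<integral>\<^sup>+ y. F2 n y * k2 (x - y) \<partial>lborel)" .
    have B1: "(\<integral>\<^sup>+ y. (ennreal (norm (b y)) + Mo n y) * k13 (x - y) \<partial>lborel) \<le> (ennreal e + ennreal e) + (ennreal e + ennreal e)"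
      by (rule bound_part[OF n1 k13m S13])
    have B2: "(\<integral>\<^sup>+ y. F2 n y * k2 (x - y) \<partial>lborel) \<le> ennreal e"
    proof -
      have "(\<integral>\<^sup>+ y. F2 n y * k2 (x - y) \<partial>lborel) \<le> (\<integral>\<^sup>+ y. ennreal (\<delta> powr (1 - ?d)) * (F2 n y * indicator (cball 0 (X + R)) y) \<partial>lborel)"
      proof (intro nn_integral_mono)
        fix y
        have "indicator (cball (0::'a) R) (x - y) \<le> (indicator (cball 0 (X + R)) y :: ennreal)"
        proof (cases "norm (x - y) \<le> R")
          case True
          then have "norm y \<le> X + R" using norm_triangle_ineq4[of x "x - y"] x by simp
          then show ?thesis using True by simp
        qed simp
        then have "F2 n y * indicator (cball (0::'a) R) (x - y) \<le> F2 n y * indicator (cball 0 (X + R)) y"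
          by (rule mult_left_mono) simp
        then have "ennreal (\<delta> powr (1 - ?d)) * (F2 n y * indicator (cball (0::'a) R) (x - y))
            \<le> ennreal (\<delta> powr (1 - ?d)) * (F2 n y * indicator (cball 0 (X + R)) y)"
          by (rule mult_left_mono) simp
        then show "F2 n y * k2 (x - y) \<le> ennreal (\<delta> powr (1 - ?d)) * (F2 n y * indicator (cball 0 (X + R)) y)"
          unfolding k2_def by (simp add: mult.left_commute)
      qed
      also have "\<dots> = ennreal (\<delta> powr (1 - ?d)) * (\<integral>\<^sup>+ y. F2 n y * indicator (cball 0 (X + R)) y \<partial>lborel)"
        by (rule nn_integral_cmult) measurable
      also have "\<dots> \<le> ennreal (\<delta> powr (1 - ?d)) * ennreal (e * \<delta> powr (?d - 1))"
        by (intro mult_left_mono L1 n) auto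
      also have "\<dots> = ennreal e"
      proof -
        have "\<delta> powr (1 - ?d) * (e * \<delta> powr (?d - 1)) = e * \<delta> powr ((1 - ?d) + (?d - 1))"
          by (simp add: powr_add[symmetric])
        also have "\<dots> = e" using \<delta> by simp
        finally show ?thesis using e \<delta> by (simp add: ennreal_mult[symmetric] del: ennreal_mult ennreal_mult')
      qed
      finally show ?thesis .
    qed
    have "Hf (\<lambda>y. b y - mollify \<phi> n b y) \<beta> t x \<le> (ennreal e + ennreal e) + (ennreal e + ennreal e) + ennreal e"
      by (rule order.trans[OF HI add_mono[OF B1 B2]])
    also have "\<dots> = ennreal (5 * e)" using e by (simp flip: ennreal_plus)
    finally show "Hf (\<lambda>y. b y - mollify \<phi> n b y) \<beta> t x \<le> ennreal (5 * e)" .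
  qed
qed

end


theorem lemma4p6:
  fixes b :: "'a::euclidean_space \<Rightarrow> 'a" and \<phi> :: "'a \<Rightarrow> real" and \<alpha> :: real
  assumes "DIM('a) \<ge> 2"
    and "0 < \<alpha>" "\<alpha> < 2"
    and "kato_d1 b"
    and "smooth_fun \<phi>" "\<forall>x. \<phi> x \<ge> 0"
    and "closure {x. \<phi> x \<noteq> 0} \<subseteq> ball 0 1"
    and "integral\<^sup>L lborel \<phi> = 1"
  shows "\<forall>K. compact K \<and> K \<subseteq> {0<..} \<times> UNIV \<longrightarrow>
    (\<lambda>n. SUP z\<in>K. Hf (\<lambda>y. b y - mollify \<phi> n b y) ((1 + min \<alpha> 1) / 2) (fst z) (snd z))
      \<longlonglongrightarrow> 0"
proof (intro allI impI)
  fix K :: "(real \<times> 'a) set"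
  assume K: "compact K \<and> K \<subseteq> {0<..} \<times> UNIV"
  have supp: "\<phi> x = 0" if "1 \<le> norm x" for x
  proof (rule ccontr)
    assume "\<phi> x \<noteq> 0"
    then have "x \<in> {x. \<phi> x \<noteq> 0}" by simp
    then have "x \<in> closure {x. \<phi> x \<noteq> 0}" by (rule subsetD[OF closure_subset])
    then have "x \<in> ball 0 1" by (rule subsetD[OF assms(7)])
    then have "norm x < 1" by simp
    then show False using that by simp
  qed
  have phinn: "\<And>x. \<phi> x \<ge> 0" using assms(6) by simp
  have "setting b \<phi>"
    by (rule setting.intro[OF assms(1) assms(4) smooth_cont[OF assms(5)] phinn supp assms(8)])
  then interpret setting b \<phi> .
  define \<beta> where "\<beta> = (1 + min \<alpha> 1) / 2"
  have \<beta>: "\<beta> > 1/2" unfolding \<beta>_def using assms(2) by simp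
  have "bounded K" by (rule compact_imp_bounded[OF conjunct1[OF K]])
  then have "\<exists>B>0. \<forall>z\<in>K. norm z \<le> B" by (simp only: bounded_pos)
  then obtain B where B0: "B > 0" "\<forall>z\<in>K. norm z \<le> B" by (elim exE conjE)
  have B: "B > 0" "\<And>z. z \<in> K \<Longrightarrow> norm z \<le> B" using B0 by auto
  show "(\<lambda>n. SUP z\<in>K. Hf (\<lambda>y. b y - mollify \<phi> n b y) ((1 + min \<alpha> 1) / 2) (fst z) (snd z)) \<longlonglongrightarrow> 0"
    unfolding \<beta>_def[symmetric]
  proof (rule ennreal_tendsto_0I)
    fix e :: real assume e: "e > 0"
    obtain n0 where n0: "\<And>n t x. n \<ge> n0 \<Longrightarrow> 0 < t \<Longrightarrow> t \<le> B \<Longrightarrow> norm x \<le> B \<Longrightarrow>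
      Hf (\<lambda>y. b y - mollify \<phi> n b y) \<beta> t x \<le> ennreal (5 * (e / 5))"
      using Hf_bound[OF \<beta>, of "e / 5" B B] e B by auto
    show "eventually (\<lambda>n. (SUP z\<in>K. Hf (\<lambda>y. b y - mollify \<phi> n b y) \<beta> (fst z) (snd z)) \<le> ennreal e) sequentially"
      unfolding eventually_sequentially
    proof (intro exI[of _ n0] allI impI SUP_least)
      fix n z assume n: "n \<ge> n0" and z: "z \<in> K"
      have t: "0 < fst z" using K z by auto
      have "fst z \<le> norm (fst z)" by simp
      moreover have "norm (fst z) \<le> norm z" using norm_fst_le[of "fst z" "snd z"] by simp
      ultimately have "fst z \<le> norm z" by (rule order_trans)
      then have tB: "fst z \<le> B" using B(2)[OF z] by simp
      have xB: "norm (snd z) \<le> B" using norm_snd_le[of "snd z" "fst z"] B(2)[OF z] by simp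
      show "Hf (\<lambda>y. b y - mollify \<phi> n b y) \<beta> (fst z) (snd z) \<le> ennreal e"
        using n0[OF n t tB xB] by simp
    qed
  qed
qed


end
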